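(* Let $\Gamma$ be a non-empty set and $1<p\le 2$. Then $FBL[\ell_p(\Gamma)]$ contains a closed subspace isomorphic to $\ell_1(\Gamma)$.
   Context: For a real Banach space $E$ with dual $E^*$ and closed unit ball $B_E$, let $H[E]$ be the vector space of all positively homogeneous functions $f:E^*\to\mathbb R$ ($f(\lambda x^* )=\lambda f(x^* )$ for $\lambda>0$). For $f\in H[E]$ put $\|f\|_{FBL[E]}:=\sup\{\sum_{k=1}^n|f(x_k^* )| : n\in\mathbb N,\ x_1^*,\dots,x_n^*\in E^*,\ \sup_{x\in B_E}\sum_{k=1}^n|x_k^*(x)|\le 1\}$. $H_0[E]:=\{f\in H[E]:\|f\|_{FBL[E]}<\infty\}$ is a Banach lattice with this norm and pointwise order/operations. For $x\in E$ let $\delta_x(x^* )=x^*(x)$. $FBL[E]$ is the closed sublattice of $H_0[E]$ generated by $\{\delta_x:x\in E\}$. *)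

theory Defs
  imports "HOL-Analysis.Analysis"
begin

text \<open>Sequence spaces over an index type 'g (the index set Gamma is the whole
  type 'g, hence automatically non-empty). Vector operations are pointwise.\<close>

definition lp :: "real \<Rightarrow> ('g \<Rightarrow> real) set" where
  "lp p = {x. (\<lambda>\<gamma>. \<bar>x \<gamma>\<bar> powr p) summable_on UNIV}"

definition lp_norm :: "real \<Rightarrow> ('g \<Rightarrow> real) \<Rightarrow> real" where
  "lp_norm p x = (\<Sum>\<^sub>\<infinity>\<gamma>. \<bar>x \<gamma>\<bar> powr p) powr (1 / p)"

definition l1 :: "('g \<Rightarrow> real) set" where
  "l1 = {x. (\<lambda>\<gamma>. \<bar>x \<gamma>\<bar>) summable_on UNIV}"

definition l1_norm :: "('g \<Rightarrow> real) \<Rightarrow> real" where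
  "l1_norm x = (\<Sum>\<^sub>\<infinity>\<gamma>. \<bar>x \<gamma>\<bar>)"

text \<open>Dual of a normed space given by a carrier V of functions (pointwise
  operations) and a norm N: bounded linear functionals on V, made extensional
  (value 0 outside V) so that they are identified with their restriction to V.\<close>

definition dual_space :: "('g \<Rightarrow> real) set \<Rightarrow> (('g \<Rightarrow> real) \<Rightarrow> real) \<Rightarrow> ((('g \<Rightarrow> real) \<Rightarrow> real) set)" where
  "dual_space V N = {\<phi>.
     (\<forall>x\<in>V. \<forall>y\<in>V. \<phi> (\<lambda>\<gamma>. x \<gamma> + y \<gamma>) = \<phi> x + \<phi> y) \<and>
     (\<forall>x\<in>V. \<forall>c. \<phi> (\<lambda>\<gamma>. c * x \<gamma>) = c * \<phi> x) \<and>
     (\<exists>C. \<forall>x\<in>V. \<bar>\<phi> x\<bar> \<le> C * N x) \<and>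
     (\<forall>x. x \<notin> V \<longrightarrow> \<phi> x = 0)}"

definition H_space :: "('g \<Rightarrow> real) set \<Rightarrow> (('g \<Rightarrow> real) \<Rightarrow> real) \<Rightarrow> (((('g \<Rightarrow> real) \<Rightarrow> real) \<Rightarrow> real) set)" where
  "H_space V N = {f.
     (\<forall>\<phi>\<in>dual_space V N. \<forall>t>0. f (\<lambda>x. t * \<phi> x) = t * f \<phi>) \<and>
     (\<forall>\<phi>. \<phi> \<notin> dual_space V N \<longrightarrow> f \<phi> = 0)}"

definition fbl_sums :: "('g \<Rightarrow> real) set \<Rightarrow> (('g \<Rightarrow> real) \<Rightarrow> real) \<Rightarrow> ((('g \<Rightarrow> real) \<Rightarrow> real) \<Rightarrow> real) \<Rightarrow> real set" where
  "fbl_sums V N f = {(\<Sum>k<(n::nat). \<bar>f (xs k)\<bar>) | n xs.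
       (\<forall>k<n. xs k \<in> dual_space V N) \<and>
       (\<forall>x\<in>V. N x \<le> 1 \<longrightarrow> (\<Sum>k<n. \<bar>xs k x\<bar>) \<le> 1)}"

definition fbl_norm :: "('g \<Rightarrow> real) set \<Rightarrow> (('g \<Rightarrow> real) \<Rightarrow> real) \<Rightarrow> ((('g \<Rightarrow> real) \<Rightarrow> real) \<Rightarrow> real) \<Rightarrow> real" where
  "fbl_norm V N f = Sup (fbl_sums V N f)"

definition H0_space :: "('g \<Rightarrow> real) set \<Rightarrow> (('g \<Rightarrow> real) \<Rightarrow> real) \<Rightarrow> (((('g \<Rightarrow> real) \<Rightarrow> real) \<Rightarrow> real) set)" where
  "H0_space V N = {f \<in> H_space V N. bdd_above (fbl_sums V N f)}"

definition delta_fun :: "('g \<Rightarrow> real) set \<Rightarrow> (('g \<Rightarrow> real) \<Rightarrow> real) \<Rightarrow> ('g \<Rightarrow> real) \<Rightarrow> (('g \<Rightarrow> real) \<Rightarrow> real) \<Rightarrow> real" where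
  "delta_fun V N x = (\<lambda>\<phi>. if \<phi> \<in> dual_space V N then \<phi> x else 0)"

definition closed_sublattice :: "('g \<Rightarrow> real) set \<Rightarrow> (('g \<Rightarrow> real) \<Rightarrow> real) \<Rightarrow> (((('g \<Rightarrow> real) \<Rightarrow> real) \<Rightarrow> real) set) \<Rightarrow> bool" where
  "closed_sublattice V N S \<longleftrightarrow>
     S \<subseteq> H0_space V N \<and>
     (\<forall>f\<in>S. \<forall>g\<in>S. (\<lambda>\<phi>. f \<phi> + g \<phi>) \<in> S) \<and>
     (\<forall>f\<in>S. \<forall>c. (\<lambda>\<phi>. c * f \<phi>) \<in> S) \<and>
     (\<forall>f\<in>S. \<forall>g\<in>S. (\<lambda>\<phi>. max (f \<phi>) (g \<phi>)) \<in> S) \<and>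
     (\<forall>u f. (\<forall>n. u n \<in> S) \<longrightarrow> f \<in> H0_space V N \<longrightarrow>
        (\<lambda>n. fbl_norm V N (\<lambda>\<phi>. u n \<phi> - f \<phi>)) \<longlonglongrightarrow> 0 \<longrightarrow> f \<in> S)"

definition FBL :: "('g \<Rightarrow> real) set \<Rightarrow> (('g \<Rightarrow> real) \<Rightarrow> real) \<Rightarrow> (((('g \<Rightarrow> real) \<Rightarrow> real) \<Rightarrow> real) set)" where
  "FBL V N = \<Inter>{S. closed_sublattice V N S \<and> delta_fun V N ` V \<subseteq> S}"

end

theory Submission
  imports Defs
begin


definition uv :: "'g \<Rightarrow> 'g \<Rightarrow> real" where "uv g = (\<lambda>d. if d = g then 1 else 0)"

context fixes p :: real assumes p1: "1 < p" and p2: "p \<le> 2" begin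

lemma lp_add: assumes "x \<in> lp p" "y \<in> lp p" shows "(\<lambda>g. x g + y g) \<in> lp p"
proof -
  have sx: "(\<lambda>g. \<bar>x g\<bar> powr p) summable_on UNIV" and sy: "(\<lambda>g. \<bar>y g\<bar> powr p) summable_on UNIV"
    using assms by (auto simp: lp_def)
  have s: "(\<lambda>g. 2 powr p * (\<bar>x g\<bar> powr p + \<bar>y g\<bar> powr p)) summable_on UNIV"
    by (intro summable_on_cmult_right summable_on_add sx sy)
  have le: "\<bar>x g + y g\<bar> powr p \<le> 2 powr p * (\<bar>x g\<bar> powr p + \<bar>y g\<bar> powr p)" for g
  proof -
    have "\<bar>x g + y g\<bar> \<le> 2 * max \<bar>x g\<bar> \<bar>y g\<bar>" by linarith
    hence "\<bar>x g + y g\<bar> powr p \<le> (2 * max \<bar>x g\<bar> \<bar>y g\<bar>) powr p"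
      using p1 by (simp add: powr_mono2)
    also have "\<dots> = 2 powr p * max \<bar>x g\<bar> \<bar>y g\<bar> powr p" by (simp add: powr_mult)
    also have "max \<bar>x g\<bar> \<bar>y g\<bar> powr p \<le> \<bar>x g\<bar> powr p + \<bar>y g\<bar> powr p"
      by (cases "\<bar>x g\<bar> \<le> \<bar>y g\<bar>") (auto simp: max_def)
    finally show ?thesis by simp
  qed
  show ?thesis unfolding lp_def
    by (auto intro!: summable_on_comparison_test[OF s] le)
qed

lemma lp_scale: assumes "x \<in> lp p" shows "(\<lambda>g. c * x g) \<in> lp p"
proof -
  have "(\<lambda>g. \<bar>c\<bar> powr p * \<bar>x g\<bar> powr p) summable_on UNIV"
    using assms by (intro summable_on_cmult_right) (auto simp: lp_def)
  thus ?thesis by (simp add: lp_def abs_mult powr_mult)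
qed

lemma lp_norm_nonneg: "0 \<le> lp_norm p x" by (simp add: lp_norm_def)

lemma lp_norm_scale: assumes "x \<in> lp p" "c \<ge> 0" shows "lp_norm p (\<lambda>g. c * x g) = c * lp_norm p x"
proof -
  have s: "(\<lambda>g. \<bar>x g\<bar> powr p) summable_on UNIV" using assms by (auto simp: lp_def)
  have "(\<Sum>\<^sub>\<infinity>g. \<bar>c * x g\<bar> powr p) = c powr p * (\<Sum>\<^sub>\<infinity>g. \<bar>x g\<bar> powr p)"
    using assms by (simp add: abs_mult powr_mult infsum_cmult_right[OF s])
  moreover have "(\<Sum>\<^sub>\<infinity>g. \<bar>x g\<bar> powr p) \<ge> 0" by (intro infsum_nonneg) auto
  ultimately show ?thesis using assms p1
    by (simp add: lp_norm_def powr_mult powr_powr)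
qed

lemma coord_powr_le: assumes "x \<in> lp p" shows "\<bar>x g\<bar> powr p \<le> (\<Sum>\<^sub>\<infinity>g. \<bar>x g\<bar> powr p)"
proof -
  have s: "(\<lambda>g. \<bar>x g\<bar> powr p) summable_on UNIV" using assms by (auto simp: lp_def)
  have "(\<Sum>\<^sub>\<infinity>d\<in>{g}. \<bar>x d\<bar> powr p) \<le> (\<Sum>\<^sub>\<infinity>g. \<bar>x g\<bar> powr p)"
    by (intro infsum_mono_neutral s) auto
  thus ?thesis by simp
qed

lemma coord_le: assumes "x \<in> lp p" shows "\<bar>x g\<bar> \<le> lp_norm p x"
proof -
  have "(\<bar>x g\<bar> powr p) powr (1/p) \<le> (\<Sum>\<^sub>\<infinity>g. \<bar>x g\<bar> powr p) powr (1/p)"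
    using p1 by (intro powr_mono2 coord_powr_le assms) auto
  thus ?thesis using p1 by (simp add: powr_powr lp_norm_def)
qed

lemma finite_sq: assumes "x \<in> lp p" "lp_norm p x \<le> 1" "finite P"
  shows "(\<Sum>g\<in>P. (x g)^2) \<le> 1"
proof -
  have s: "(\<lambda>g. \<bar>x g\<bar> powr p) summable_on UNIV" using assms by (auto simp: lp_def)
  define S where "S = (\<Sum>\<^sub>\<infinity>g. \<bar>x g\<bar> powr p)"
  have S0: "S \<ge> 0" unfolding S_def by (intro infsum_nonneg) auto
  have "S powr (1/p) \<le> 1" using assms by (simp add: lp_norm_def S_def)
  hence "(S powr (1/p)) powr p \<le> 1 powr p" using p1 by (intro powr_mono2) auto
  hence S1: "S \<le> 1" using p1 S0 by (simp add: powr_powr)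
  have "(\<Sum>g\<in>P. \<bar>x g\<bar> powr p) = (\<Sum>\<^sub>\<infinity>g\<in>P. \<bar>x g\<bar> powr p)" using assms by simp
  also have "\<dots> \<le> S" unfolding S_def by (intro infsum_mono_neutral s) (auto simp: assms)
  finally have P1: "(\<Sum>g\<in>P. \<bar>x g\<bar> powr p) \<le> 1" using S1 by simp
  have "(x g)^2 \<le> \<bar>x g\<bar> powr p" for g
  proof -
    have "\<bar>x g\<bar> \<le> 1" using coord_le[OF assms(1), of g] assms by simp
    hence "\<bar>x g\<bar> powr 2 \<le> \<bar>x g\<bar> powr p" using p2 by (intro powr_mono') auto
    thus ?thesis by (simp add: powr_numeral)
  qed
  hence "(\<Sum>g\<in>P. (x g)^2) \<le> (\<Sum>g\<in>P. \<bar>x g\<bar> powr p)" by (intro sum_mono)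
  thus ?thesis using P1 by simp
qed

lemma uv_lp: "uv g \<in> lp p" and uv_norm: "lp_norm p (uv g) = 1"
proof -
  have h: "((\<lambda>d. \<bar>uv g d\<bar> powr p) has_sum 1) UNIV"
    by (rule has_sum_finite_neutralI[where B="{g}"]) (auto simp: uv_def)
  show "uv g \<in> lp p" using h by (auto simp: lp_def summable_on_def)
  show "lp_norm p (uv g) = 1" using h by (simp add: lp_norm_def infsumI)
qed

end

lemma fin_supp: assumes "finite B" "\<And>x. x \<notin> B \<Longrightarrow> f x = 0"
  shows "(f :: 'a \<Rightarrow> real) summable_on UNIV" "infsum f UNIV = sum f B"
proof -
  have h: "(f has_sum sum f B) UNIV" by (rule has_sum_finite_neutralI[where B=B]) (use assms in auto)
  thus "f summable_on UNIV" by (auto simp: summable_on_def)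
  show "infsum f UNIV = sum f B" using h by (simp add: infsumI)
qed




context fixes p :: real assumes p1: "1 < p" and p2: "p \<le> 2" begin


lemma dual_bound: assumes "\<phi> \<in> (dual_space (lp p) (lp_norm p))" shows "\<exists>C>0. \<forall>x\<in>lp p. \<bar>\<phi> x\<bar> \<le> C * lp_norm p x"
proof -
  obtain C where C: "\<forall>x\<in>lp p. \<bar>\<phi> x\<bar> \<le> C * lp_norm p x" using assms by (auto simp: dual_space_def)
  have "\<bar>\<phi> x\<bar> \<le> (\<bar>C\<bar> + 1) * lp_norm p x" if "x \<in> lp p" for x
  proof -
    have "C * lp_norm p x \<le> (\<bar>C\<bar> + 1) * lp_norm p x"
      using lp_norm_nonneg[OF p1 p2, of x] by (intro mult_right_mono) auto
    thus ?thesis using C that by force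
  qed
  thus ?thesis by (intro exI[of _ "\<bar>C\<bar>+1"]) auto
qed

lemma dual_uv_bound: assumes "\<phi> \<in> (dual_space (lp p) (lp_norm p))" shows "\<exists>C>0. \<forall>g. \<bar>\<phi> (uv g)\<bar> \<le> C"
proof -
  obtain C where "C > 0" "\<forall>x\<in>lp p. \<bar>\<phi> x\<bar> \<le> C * lp_norm p x" using dual_bound[OF assms] by blast
  hence "\<bar>\<phi> (uv g)\<bar> \<le> C" for g using uv_lp[OF p1 p2, of g] uv_norm[OF p1 p2, of g] by force
  thus ?thesis using \<open>C > 0\<close> by blast
qed

lemma dual_add: "\<phi> \<in> (dual_space (lp p) (lp_norm p)) \<Longrightarrow> x \<in> lp p \<Longrightarrow> y \<in> lp p \<Longrightarrow> \<phi> (\<lambda>g. x g + y g) = \<phi> x + \<phi> y"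
  by (auto simp: dual_space_def)
lemma dual_scale: "\<phi> \<in> (dual_space (lp p) (lp_norm p)) \<Longrightarrow> x \<in> lp p \<Longrightarrow> \<phi> (\<lambda>g. c * x g) = c * \<phi> x"
  by (auto simp: dual_space_def)
lemma dual_out: "\<phi> \<in> (dual_space (lp p) (lp_norm p)) \<Longrightarrow> x \<notin> lp p \<Longrightarrow> \<phi> x = 0"
  by (auto simp: dual_space_def)

lemma dual_smult: assumes "\<phi> \<in> (dual_space (lp p) (lp_norm p))" shows "(\<lambda>x. t * \<phi> x) \<in> (dual_space (lp p) (lp_norm p))"
proof -
  obtain C where C: "\<forall>x\<in>lp p. \<bar>\<phi> x\<bar> \<le> C * lp_norm p x" using assms by (auto simp: dual_space_def)
  have b0: "\<bar>t * \<phi> x\<bar> \<le> (\<bar>t\<bar> * C) * lp_norm p x" if "x \<in> lp p" for x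
  proof -
    have "\<bar>t\<bar> * \<bar>\<phi> x\<bar> \<le> \<bar>t\<bar> * (C * lp_norm p x)" using C that by (intro mult_left_mono) auto
    thus ?thesis by (simp add: abs_mult mult.assoc)
  qed
  hence b: "\<forall>x\<in>lp p. \<bar>t * \<phi> x\<bar> \<le> (\<bar>t\<bar> * C) * lp_norm p x" by blast
  have a: "\<forall>x\<in>lp p. \<forall>y\<in>lp p. t * \<phi> (\<lambda>g. x g + y g) = t * \<phi> x + t * \<phi> y"
    using dual_add[OF assms] by (simp add: distrib_left)
  have c: "\<forall>x\<in>lp p. \<forall>c. t * \<phi> (\<lambda>g. c * x g) = c * (t * \<phi> x)"
    using dual_scale[OF assms] by simp
  have e: "\<forall>x. x \<notin> lp p \<longrightarrow> t * \<phi> x = 0" using dual_out[OF assms] by simp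
  show ?thesis unfolding dual_space_def using a b c e by blast
qed

definition ev :: "'g \<Rightarrow> ('g \<Rightarrow> real) \<Rightarrow> real" where
  "ev g = (\<lambda>x. if x \<in> lp p then x g else 0)"

lemma ev_dual: "ev g \<in> (dual_space (lp p) (lp_norm p))"
  unfolding dual_space_def ev_def
  using lp_add[OF p1 p2] lp_scale[OF p1 p2] coord_le[OF p1 p2]
  by (auto intro!: exI[of _ 1] simp: p1 p2)

lemma ev_adm: "x \<in> lp p \<Longrightarrow> lp_norm p x \<le> 1 \<Longrightarrow> \<bar>ev g x\<bar> \<le> 1"
  using coord_le[OF p1 p2, of x g] by (auto simp: ev_def)

lemma zero_in_fs: "0 \<in> fbl_sums (lp p) (lp_norm p) f"
  unfolding fbl_sums_def by (rule CollectI, rule exI[of _ 0], auto)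

lemma le_fn: "bdd_above (fbl_sums (lp p) (lp_norm p) f) \<Longrightarrow> s \<in> fbl_sums (lp p) (lp_norm p) f \<Longrightarrow> s \<le> fbl_norm (lp p) (lp_norm p) f"
  unfolding fbl_norm_def by (rule cSup_upper)

lemma fn_le: "(\<And>s. s \<in> fbl_sums (lp p) (lp_norm p) f \<Longrightarrow> s \<le> B) \<Longrightarrow> fbl_norm (lp p) (lp_norm p) f \<le> B"
  unfolding fbl_norm_def using zero_in_fs by (intro cSup_least) auto

lemma fn_nonneg: "bdd_above (fbl_sums (lp p) (lp_norm p) f) \<Longrightarrow> 0 \<le> fbl_norm (lp p) (lp_norm p) f"
  using le_fn zero_in_fs by blast

lemma single_le: assumes "bdd_above (fbl_sums (lp p) (lp_norm p) f)" "\<psi> \<in> (dual_space (lp p) (lp_norm p))"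
  "\<And>x. x \<in> lp p \<Longrightarrow> lp_norm p x \<le> 1 \<Longrightarrow> \<bar>\<psi> x\<bar> \<le> 1"
  shows "\<bar>f \<psi>\<bar> \<le> fbl_norm (lp p) (lp_norm p) f"
proof -
  have "(\<Sum>k<(1::nat). \<bar>f ((\<lambda>_. \<psi>) k)\<bar>) \<in> fbl_sums (lp p) (lp_norm p) f"
    unfolding fbl_sums_def using assms(2,3) by (intro CollectI exI[of _ 1] exI[of _ "\<lambda>_. \<psi>"]) auto
  thus ?thesis using le_fn[OF assms(1)] by simp
qed

lemma fs_comb: assumes "bdd_above (fbl_sums (lp p) (lp_norm p) f)" "bdd_above (fbl_sums (lp p) (lp_norm p) g)" "a \<ge> 0" "b \<ge> 0"
  "\<And>\<phi>. \<phi> \<in> (dual_space (lp p) (lp_norm p)) \<Longrightarrow> \<bar>h \<phi>\<bar> \<le> a * \<bar>f \<phi>\<bar> + b * \<bar>g \<phi>\<bar>"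
  and s: "s \<in> fbl_sums (lp p) (lp_norm p) h" shows "s \<le> a * fbl_norm (lp p) (lp_norm p) f + b * fbl_norm (lp p) (lp_norm p) g"
proof -
  obtain n xs where s: "s = (\<Sum>k<(n::nat). \<bar>h (xs k)\<bar>)" and xs: "\<forall>k<n. xs k \<in> (dual_space (lp p) (lp_norm p))"
    and adm: "\<forall>x\<in>lp p. lp_norm p x \<le> 1 \<longrightarrow> (\<Sum>k<n. \<bar>xs k x\<bar>) \<le> 1"
    using s unfolding fbl_sums_def by blast
  have f: "(\<Sum>k<n. \<bar>f (xs k)\<bar>) \<in> fbl_sums (lp p) (lp_norm p) f" and g: "(\<Sum>k<n. \<bar>g (xs k)\<bar>) \<in> fbl_sums (lp p) (lp_norm p) g"
    unfolding fbl_sums_def using xs adm by blast+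
  have "s \<le> (\<Sum>k<n. a * \<bar>f (xs k)\<bar> + b * \<bar>g (xs k)\<bar>)"
    unfolding s using xs assms(5) by (intro sum_mono) auto
  also have "\<dots> = a * (\<Sum>k<n. \<bar>f (xs k)\<bar>) + b * (\<Sum>k<n. \<bar>g (xs k)\<bar>)"
    by (simp add: sum.distrib sum_distrib_left)
  also have "\<dots> \<le> a * fbl_norm (lp p) (lp_norm p) f + b * fbl_norm (lp p) (lp_norm p) g"
    using le_fn[OF assms(1) f] le_fn[OF assms(2) g] assms(3,4)
    by (intro add_mono mult_left_mono) auto
  finally show ?thesis .
qed

lemma bdd_comb: assumes "bdd_above (fbl_sums (lp p) (lp_norm p) f)" "bdd_above (fbl_sums (lp p) (lp_norm p) g)" "a \<ge> 0" "b \<ge> 0"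
  "\<And>\<phi>. \<phi> \<in> (dual_space (lp p) (lp_norm p)) \<Longrightarrow> \<bar>h \<phi>\<bar> \<le> a * \<bar>f \<phi>\<bar> + b * \<bar>g \<phi>\<bar>"
  shows "bdd_above (fbl_sums (lp p) (lp_norm p) h)"
  using fs_comb[OF assms] by (intro bdd_aboveI) 

lemma delta_H: "delta_fun (lp p) (lp_norm p) x \<in> H_space (lp p) (lp_norm p)"
  unfolding H_space_def delta_fun_def using dual_smult by auto

lemma delta_bdd: assumes "x \<in> lp p" shows "bdd_above (fbl_sums (lp p) (lp_norm p) (delta_fun (lp p) (lp_norm p) x))"
proof (rule bdd_aboveI)
  fix s assume "s \<in> fbl_sums (lp p) (lp_norm p) (delta_fun (lp p) (lp_norm p) x)"
  then obtain n xs where s: "s = (\<Sum>k<(n::nat). \<bar>delta_fun (lp p) (lp_norm p) x (xs k)\<bar>)" and xs: "\<forall>k<n. xs k \<in> (dual_space (lp p) (lp_norm p))"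
    and adm: "\<forall>x\<in>lp p. lp_norm p x \<le> 1 \<longrightarrow> (\<Sum>k<n. \<bar>xs k x\<bar>) \<le> 1"
    unfolding fbl_sums_def by blast
  define c where "c = 1 / (lp_norm p x + 1)"
  have c0: "c > 0" using lp_norm_nonneg[OF p1 p2, of x] by (simp add: c_def)
  have cx: "(\<lambda>g. c * x g) \<in> lp p" using lp_scale[OF p1 p2 assms] .
  have "lp_norm p (\<lambda>g. c * x g) = c * lp_norm p x" using lp_norm_scale[OF p1 p2 assms] c0 by simp
  also have "\<dots> \<le> 1" using lp_norm_nonneg[OF p1 p2, of x] by (simp add: c_def field_simps)
  finally have "(\<Sum>k<n. \<bar>xs k (\<lambda>g. c * x g)\<bar>) \<le> 1" using adm cx by blast
  also have "(\<Sum>k<n. \<bar>xs k (\<lambda>g. c * x g)\<bar>) = c * s"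
  proof -
    have "\<bar>xs k (\<lambda>g. c * x g)\<bar> = c * \<bar>delta_fun (lp p) (lp_norm p) x (xs k)\<bar>" if "k<n" for k
    proof -
      have "xs k \<in> dual_space (lp p) (lp_norm p)" using xs that by blast
      thus ?thesis using dual_scale[OF _ assms, of "xs k" c] c0 by (simp add: delta_fun_def abs_mult)
    qed
    thus ?thesis unfolding s by (simp add: sum_distrib_left)
  qed
  finally have "c * s \<le> 1" .
  thus "s \<le> lp_norm p x + 1" using c0 lp_norm_nonneg[OF p1 p2, of x] by (simp add: c_def field_simps)
qed

lemma H_hom: "f \<in> H_space (lp p) (lp_norm p) \<Longrightarrow> \<phi> \<in> dual_space (lp p) (lp_norm p) \<Longrightarrow> t > 0 \<Longrightarrow> f (\<lambda>x. t * \<phi> x) = t * f \<phi>"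
  unfolding H_space_def by blast
lemma H_out: "f \<in> H_space (lp p) (lp_norm p) \<Longrightarrow> \<phi> \<notin> dual_space (lp p) (lp_norm p) \<Longrightarrow> f \<phi> = 0"
  unfolding H_space_def by blast
lemma H_I: "(\<And>\<phi> t. \<phi> \<in> dual_space (lp p) (lp_norm p) \<Longrightarrow> t > 0 \<Longrightarrow> f (\<lambda>x. t * \<phi> x) = t * f \<phi>)
  \<Longrightarrow> (\<And>\<phi>. \<phi> \<notin> dual_space (lp p) (lp_norm p) \<Longrightarrow> f \<phi> = 0) \<Longrightarrow> f \<in> H_space (lp p) (lp_norm p)"
  unfolding H_space_def by blast

lemma H0_closed: "closed_sublattice (lp p) (lp_norm p) (H0_space (lp p) (lp_norm p))"
proof -
  let ?H = "H_space (lp p) (lp_norm p)"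
  have add: "(\<lambda>\<phi>. f \<phi> + g \<phi>) \<in> H0_space (lp p) (lp_norm p)"
    if "f \<in> H0_space (lp p) (lp_norm p)" "g \<in> H0_space (lp p) (lp_norm p)" for f g
  proof -
    have fH: "f \<in> ?H" and gH: "g \<in> ?H" and bf: "bdd_above (fbl_sums (lp p) (lp_norm p) f)"
      and bg: "bdd_above (fbl_sums (lp p) (lp_norm p) g)" using that by (auto simp: H0_space_def)
    have "(\<lambda>\<phi>. f \<phi> + g \<phi>) \<in> ?H"
      by (rule H_I) (simp_all add: H_hom[OF fH] H_hom[OF gH] H_out[OF fH] H_out[OF gH] distrib_left)
    moreover have "bdd_above (fbl_sums (lp p) (lp_norm p) (\<lambda>\<phi>. f \<phi> + g \<phi>))"
      by (rule bdd_comb[OF bf bg, of 1 1]) auto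
    ultimately show ?thesis by (simp add: H0_space_def)
  qed
  have sc: "(\<lambda>\<phi>. c * f \<phi>) \<in> H0_space (lp p) (lp_norm p)"
    if "f \<in> H0_space (lp p) (lp_norm p)" for f c
  proof -
    have fH: "f \<in> ?H" and bf: "bdd_above (fbl_sums (lp p) (lp_norm p) f)"
      using that by (auto simp: H0_space_def)
    have "(\<lambda>\<phi>. c * f \<phi>) \<in> ?H"
      by (rule H_I) (simp_all add: H_hom[OF fH] H_out[OF fH])
    moreover have "bdd_above (fbl_sums (lp p) (lp_norm p) (\<lambda>\<phi>. c * f \<phi>))"
      by (rule bdd_comb[OF bf bf, of "\<bar>c\<bar>" 0]) (auto simp: abs_mult)
    ultimately show ?thesis by (simp add: H0_space_def)
  qed
  have mx: "(\<lambda>\<phi>. max (f \<phi>) (g \<phi>)) \<in> H0_space (lp p) (lp_norm p)"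
    if "f \<in> H0_space (lp p) (lp_norm p)" "g \<in> H0_space (lp p) (lp_norm p)" for f g
  proof -
    have fH: "f \<in> ?H" and gH: "g \<in> ?H" and bf: "bdd_above (fbl_sums (lp p) (lp_norm p) f)"
      and bg: "bdd_above (fbl_sums (lp p) (lp_norm p) g)" using that by (auto simp: H0_space_def)
    have "(\<lambda>\<phi>. max (f \<phi>) (g \<phi>)) \<in> ?H"
      by (rule H_I) (simp_all add: H_hom[OF fH] H_hom[OF gH] H_out[OF fH] H_out[OF gH] max_mult_distrib_left)
    moreover have "bdd_above (fbl_sums (lp p) (lp_norm p) (\<lambda>\<phi>. max (f \<phi>) (g \<phi>)))"
      by (rule bdd_comb[OF bf bg, of 1 1]) auto
    ultimately show ?thesis by (simp add: H0_space_def)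
  qed
  show ?thesis unfolding closed_sublattice_def using add sc mx by blast
qed

lemma FBL_sub_H0: "FBL (lp p) (lp_norm p) \<subseteq> H0_space (lp p) (lp_norm p)"
proof -
  have "delta_fun (lp p) (lp_norm p) ` lp p \<subseteq> H0_space (lp p) (lp_norm p)"
    using delta_H delta_bdd by (auto simp: H0_space_def)
  thus ?thesis unfolding FBL_def using H0_closed by blast
qed

end



fun signs :: "'g list \<Rightarrow> ('g \<Rightarrow> real) list" where
  "signs [] = [(\<lambda>_. 0)]"
| "signs (a # as) = map (\<lambda>e. e(a := 1)) (signs as) @ map (\<lambda>e. e(a := -1)) (signs as)"

lemma length_signs: "length (signs as) = 2 ^ length as"
  by (induction as) auto

lemma signs_abs: "e \<in> set (signs as) \<Longrightarrow> g \<in> set as \<Longrightarrow> \<bar>e g\<bar> = 1"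
  by (induction as arbitrary: e) auto

lemma signs_sq: "distinct as \<Longrightarrow>
  sum_list (map (\<lambda>e. (c + (\<Sum>g\<in>set as. e g * x g))^2) (signs as)) = 2 ^ length as * (c^2 + (\<Sum>g\<in>set as. (x g)^2))"
proof (induction as arbitrary: c)
  case Nil thus ?case by simp
next
  case (Cons a as)
  have a: "a \<notin> set as" and d: "distinct as" using Cons.prems by auto
  have eq: "(\<Sum>g\<in>set (a # as). (e(a:=s)) g * x g) = s * x a + (\<Sum>g\<in>set as. e g * x g)" for e s
  proof -
    have "(\<Sum>g\<in>set as. (e(a:=s)) g * x g) = (\<Sum>g\<in>set as. e g * x g)"
      using a by (intro sum.cong) auto
    thus ?thesis using a by simp
  qed
  have m1: "map (\<lambda>e. (c + (\<Sum>g\<in>set (a#as). e g * x g))^2) (map (\<lambda>e. e(a := 1)) (signs as))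
      = map (\<lambda>e. ((c + x a) + (\<Sum>g\<in>set as. e g * x g))^2) (signs as)"
    unfolding map_map o_def by (intro map_cong refl, subst eq, rule arg_cong[where f="\<lambda>t. t^2"], linarith)
  have m2: "map (\<lambda>e. (c + (\<Sum>g\<in>set (a#as). e g * x g))^2) (map (\<lambda>e. e(a := -1)) (signs as))
      = map (\<lambda>e. ((c - x a) + (\<Sum>g\<in>set as. e g * x g))^2) (signs as)"
    unfolding map_map o_def by (intro map_cong refl, subst eq, rule arg_cong[where f="\<lambda>t. t^2"], linarith)
  have "sum_list (map (\<lambda>e. (c + (\<Sum>g\<in>set (a#as). e g * x g))^2) (signs (a#as)))
      = sum_list (map (\<lambda>e. ((c + x a) + (\<Sum>g\<in>set as. e g * x g))^2) (signs as))
      + sum_list (map (\<lambda>e. ((c - x a) + (\<Sum>g\<in>set as. e g * x g))^2) (signs as))"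
    by (simp only: signs.simps map_append sum_list_append m1 m2)
  also have "\<dots> = 2 ^ length as * ((c + x a)^2 + (\<Sum>g\<in>set as. (x g)^2)) + 2 ^ length as * ((c - x a)^2 + (\<Sum>g\<in>set as. (x g)^2))"
    using Cons.IH[OF d] by simp
  also have "\<dots> = 2 ^ length (a#as) * (c^2 + (\<Sum>g\<in>set (a#as). (x g)^2))"
  proof -
    have q: "(\<Sum>g\<in>set (a#as). (x g)^2) = (x a)^2 + (\<Sum>g\<in>set as. (x g)^2)" using a by simp
    have alg: "N * ((c + y)^2 + Q) + N * ((c - y)^2 + Q) = (2 * N) * (c^2 + (y^2 + Q))" for N y Q :: real
      by (simp add: power2_eq_square algebra_simps)
    show ?thesis unfolding q by (simp only: alg length_Cons power_Suc)
  qed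
  finally show ?case .
qed

definition radf :: "real \<Rightarrow> 'g list \<Rightarrow> ('g \<Rightarrow> real) \<Rightarrow> ('g \<Rightarrow> real) \<Rightarrow> real" where
  "radf p as e = (\<lambda>x. if x \<in> lp p then (\<Sum>g\<in>set as. e g * x g) / 2 ^ length as else 0)"

definition Tm :: "real \<Rightarrow> ('g \<Rightarrow> real) \<Rightarrow> (('g \<Rightarrow> real) \<Rightarrow> real) \<Rightarrow> real" where
  "Tm p z = (\<lambda>\<phi>. if \<phi> \<in> dual_space (lp p) (lp_norm p) then (\<Sum>\<^sub>\<infinity>g. z g * \<bar>\<phi> (uv g)\<bar>) else 0)"

lemma infsum_sum_fin: fixes f :: "nat \<Rightarrow> 'a \<Rightarrow> real" shows "(\<And>k. k < (n::nat) \<Longrightarrow> f k summable_on A) \<Longrightarrow>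
   (\<lambda>x. \<Sum>k<n. f k x) summable_on A \<and> infsum (\<lambda>x. \<Sum>k<n. f k x) A = (\<Sum>k<n. infsum (f k) A)"
proof (induction n)
  case 0 thus ?case by simp
next
  case (Suc n)
  hence ih: "(\<lambda>x. \<Sum>k<n. f k x) summable_on A" "infsum (\<lambda>x. \<Sum>k<n. f k x) A = (\<Sum>k<n. infsum (f k) A)"
    by auto
  have fn: "f n summable_on A" using Suc.prems by auto
  show ?case using ih fn by (simp add: summable_on_add[OF ih(1) fn] infsum_add[OF ih(1) fn])
qed

lemma l1_abs: "x \<in> l1 \<Longrightarrow> (\<lambda>g. \<bar>x g\<bar>) summable_on UNIV" by (simp add: l1_def)

lemma l1_summable: "x \<in> l1 \<Longrightarrow> x summable_on UNIV"
  by (rule abs_summable_summable) (simp add: l1_def)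

lemma l1_add: assumes "x \<in> l1" "y \<in> l1" shows "(\<lambda>g. x g + y g) \<in> l1"
proof -
  have "(\<lambda>g. \<bar>x g\<bar> + \<bar>y g\<bar>) summable_on UNIV" using assms by (intro summable_on_add) (auto simp: l1_def)
  moreover have "\<bar>x g + y g\<bar> \<le> \<bar>x g\<bar> + \<bar>y g\<bar>" for g by (rule abs_triangle_ineq)
  ultimately have "(\<lambda>g. \<bar>x g + y g\<bar>) summable_on UNIV"
    by (rule summable_on_comparison_test) auto
  thus ?thesis by (simp add: l1_def)
qed

lemma l1_scale: assumes "x \<in> l1" shows "(\<lambda>g. c * x g) \<in> l1"
proof -
  have "(\<lambda>g. \<bar>c\<bar> * \<bar>x g\<bar>) summable_on UNIV" using assms by (intro summable_on_cmult_right) (auto simp: l1_def)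
  thus ?thesis by (simp add: l1_def abs_mult)
qed

lemma l1_diff: assumes "x \<in> l1" "y \<in> l1" shows "(\<lambda>g. x g - y g) \<in> l1"
  using l1_add[OF assms(1) l1_scale[OF assms(2), of "-1"]] by simp

lemma l1_norm_nonneg: "0 \<le> l1_norm x" unfolding l1_norm_def by (intro infsum_nonneg) auto

context fixes p :: real assumes p1: "1 < p" and p2: "p \<le> 2" begin

lemma summ_abs: assumes "z \<in> l1" "\<phi> \<in> dual_space (lp p) (lp_norm p)"
  shows "(\<lambda>g. \<bar>z g\<bar> * \<bar>\<phi> (uv g)\<bar>) summable_on UNIV"
proof -
  obtain C where C: "C > 0" "\<forall>g. \<bar>\<phi> (uv g)\<bar> \<le> C" using dual_uv_bound[OF p1 p2 assms(2)] by blast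
  have "(\<lambda>g. C * \<bar>z g\<bar>) summable_on UNIV" using assms by (intro summable_on_cmult_right) (auto simp: l1_def)
  moreover have "\<bar>z g\<bar> * \<bar>\<phi> (uv g)\<bar> \<le> C * \<bar>z g\<bar>" for g
    using mult_left_mono[of "\<bar>\<phi> (uv g)\<bar>" C "\<bar>z g\<bar>"] C by (simp add: mult.commute)
  ultimately show ?thesis
    by (rule summable_on_comparison_test) auto
qed

lemma summ: assumes "z \<in> l1" "\<phi> \<in> dual_space (lp p) (lp_norm p)"
  shows "(\<lambda>g. z g * \<bar>\<phi> (uv g)\<bar>) summable_on UNIV"
  by (rule abs_summable_summable) (use summ_abs[OF assms] in \<open>simp add: abs_mult\<close>)

lemma Tm_bound: assumes "z \<in> l1" "\<phi> \<in> dual_space (lp p) (lp_norm p)"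
  shows "\<bar>Tm p z \<phi>\<bar> \<le> (\<Sum>\<^sub>\<infinity>g. \<bar>z g\<bar> * \<bar>\<phi> (uv g)\<bar>)"
proof -
  have "Infinite_Sum.abs_summable_on (\<lambda>g. z g * \<bar>\<phi> (uv g)\<bar>) UNIV"
    using summ_abs[OF assms] by (simp add: abs_mult)
  from norm_infsum_bound[OF this] show ?thesis using assms(2) by (simp add: Tm_def abs_mult)
qed

lemma upper: assumes "w \<in> l1" "\<And>\<phi>. \<phi> \<in> dual_space (lp p) (lp_norm p) \<Longrightarrow> \<bar>h \<phi>\<bar> \<le> (\<Sum>\<^sub>\<infinity>g. \<bar>w g\<bar> * \<bar>\<phi> (uv g)\<bar>)"
  and s: "s \<in> fbl_sums (lp p) (lp_norm p) h" shows "s \<le> l1_norm w"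
proof -
  obtain n xs where s: "s = (\<Sum>k<(n::nat). \<bar>h (xs k)\<bar>)" and xs: "\<forall>k<n. xs k \<in> dual_space (lp p) (lp_norm p)"
    and adm: "\<forall>x\<in>lp p. lp_norm p x \<le> 1 \<longrightarrow> (\<Sum>k<n. \<bar>xs k x\<bar>) \<le> 1"
    using s unfolding fbl_sums_def by blast
  have sk: "(\<lambda>g. \<bar>w g\<bar> * \<bar>xs k (uv g)\<bar>) summable_on UNIV" if "k < n" for k
    using summ_abs[OF assms(1)] xs that by blast
  note I = infsum_sum_fin[of n "\<lambda>k g. \<bar>w g\<bar> * \<bar>xs k (uv g)\<bar>" UNIV, OF sk]
  have "s \<le> (\<Sum>k<n. (\<Sum>\<^sub>\<infinity>g. \<bar>w g\<bar> * \<bar>xs k (uv g)\<bar>))"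
    unfolding s using xs assms(2) by (intro sum_mono) auto
  also have "\<dots> = (\<Sum>\<^sub>\<infinity>g. (\<Sum>k<n. \<bar>w g\<bar> * \<bar>xs k (uv g)\<bar>))" using I by simp
  finally have st: "s \<le> (\<Sum>\<^sub>\<infinity>g. (\<Sum>k<n. \<bar>w g\<bar> * \<bar>xs k (uv g)\<bar>))" .
  have pw: "(\<Sum>k<n. \<bar>w g\<bar> * \<bar>xs k (uv g)\<bar>) \<le> \<bar>w g\<bar>" for g
  proof -
    have "(\<Sum>k<n. \<bar>xs k (uv g)\<bar>) \<le> 1" using adm uv_lp[OF p1 p2, of g] uv_norm[OF p1 p2, of g] by simp
    hence "\<bar>w g\<bar> * (\<Sum>k<n. \<bar>xs k (uv g)\<bar>) \<le> \<bar>w g\<bar> * 1" by (intro mult_left_mono) auto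
    thus ?thesis by (simp add: sum_distrib_left)
  qed
  have "(\<lambda>g. \<bar>w g\<bar>) summable_on UNIV" using assms(1) by (simp add: l1_def)
  hence "(\<Sum>\<^sub>\<infinity>g. (\<Sum>k<n. \<bar>w g\<bar> * \<bar>xs k (uv g)\<bar>)) \<le> (\<Sum>\<^sub>\<infinity>g. \<bar>w g\<bar>)"
    using I pw by (intro infsum_mono) auto
  with st show ?thesis by (simp add: l1_norm_def)
qed

lemma Tm_bdd: "z \<in> l1 \<Longrightarrow> bdd_above (fbl_sums (lp p) (lp_norm p) (Tm p z))"
  using upper[OF _ Tm_bound] by (intro bdd_aboveI) 

lemma Tm_upper: "z \<in> l1 \<Longrightarrow> fbl_norm (lp p) (lp_norm p) (Tm p z) \<le> l1_norm z"
  using upper[OF _ Tm_bound] by (intro fn_le[OF p1 p2]) 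

lemma Tm_H: "Tm p z \<in> H_space (lp p) (lp_norm p)"
proof -
  have "Tm p z (\<lambda>x. t * \<phi> x) = t * Tm p z \<phi>" if "\<phi> \<in> dual_space (lp p) (lp_norm p)" "t > 0" for \<phi> t
    using that dual_smult[OF p1 p2 that(1), of t]
    by (simp add: Tm_def abs_mult mult.left_commute infsum_cmult_right')
  thus ?thesis by (intro H_I[OF p1 p2]) (auto simp: Tm_def)
qed

lemma Tm_H0: assumes "z \<in> l1" shows "Tm p z \<in> H0_space (lp p) (lp_norm p)"
  unfolding H0_space_def by (rule CollectI, rule conjI[OF Tm_H Tm_bdd[OF assms]])

lemma Tm_add: assumes "x \<in> l1" "y \<in> l1" shows "Tm p (\<lambda>g. x g + y g) = (\<lambda>\<phi>. Tm p x \<phi> + Tm p y \<phi>)"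
proof -
  have "Tm p (\<lambda>g. x g + y g) \<phi> = Tm p x \<phi> + Tm p y \<phi>" for \<phi>
  proof (cases "\<phi> \<in> dual_space (lp p) (lp_norm p)")
    case True
    thus ?thesis using summ[OF assms(1) True] summ[OF assms(2) True]
      by (simp add: Tm_def distrib_right infsum_add)
  qed (simp add: Tm_def)
  thus ?thesis by (intro ext)
qed

lemma Tm_scale: assumes "x \<in> l1" shows "Tm p (\<lambda>g. c * x g) = (\<lambda>\<phi>. c * Tm p x \<phi>)"
proof -
  have "Tm p (\<lambda>g. c * x g) \<phi> = c * Tm p x \<phi>" for \<phi>
  proof (cases "\<phi> \<in> dual_space (lp p) (lp_norm p)")
    case True
    thus ?thesis using summ[OF assms(1) True]
      by (simp add: Tm_def mult.assoc infsum_cmult_right)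
  qed (simp add: Tm_def)
  thus ?thesis by (intro ext)
qed

lemma Tm_diff: assumes "x \<in> l1" "y \<in> l1" shows "Tm p (\<lambda>g. x g - y g) = (\<lambda>\<phi>. Tm p x \<phi> - Tm p y \<phi>)"
  using Tm_add[OF assms(1) l1_scale[OF assms(2), of "-1"]] Tm_scale[OF assms(2), of "-1"] by simp

lemma ev_uv: "ev p g0 (uv g) = (if g = g0 then 1 else 0)"
  unfolding ev_def[OF p1 p2] using uv_lp[OF p1 p2, of g] by (simp add: uv_def)

lemma Tm_ev: "Tm p z (ev p g0) = z g0"
proof -
  have "(\<Sum>\<^sub>\<infinity>g. z g * \<bar>ev p g0 (uv g)\<bar>) = (\<Sum>g\<in>{g0}. z g * \<bar>ev p g0 (uv g)\<bar>)"
    by (rule fin_supp(2)) (auto simp: ev_uv)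
  thus ?thesis using ev_dual[OF p1 p2, of g0] unfolding Tm_def by (simp add: ev_uv)
qed

end



context fixes p :: real assumes p1: "1 < p" and p2: "p \<le> 2" begin

lemma radf_dual: "radf p as e \<in> dual_space (lp p) (lp_norm p)"
proof -
  let ?N = "(2::real) ^ length as"
  have add: "\<forall>x\<in>lp p. \<forall>y\<in>lp p. radf p as e (\<lambda>g. x g + y g) = radf p as e x + radf p as e y"
    by (simp add: radf_def lp_add[OF p1 p2] sum.distrib distrib_left add_divide_distrib)
  have sc: "\<forall>x\<in>lp p. \<forall>c. radf p as e (\<lambda>g. c * x g) = c * radf p as e x"
    by (simp add: radf_def lp_scale[OF p1 p2] sum_distrib_left mult.left_commute)
  have bd: "\<bar>radf p as e x\<bar> \<le> ((\<Sum>g\<in>set as. \<bar>e g\<bar>) / ?N) * lp_norm p x" if "x \<in> lp p" for x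
  proof -
    have "\<bar>\<Sum>g\<in>set as. e g * x g\<bar> \<le> (\<Sum>g\<in>set as. \<bar>e g\<bar> * \<bar>x g\<bar>)"
      by (rule order_trans[OF sum_abs]) (simp add: abs_mult)
    also have "\<dots> \<le> (\<Sum>g\<in>set as. \<bar>e g\<bar> * lp_norm p x)"
      using coord_le[OF p1 p2 that] by (intro sum_mono mult_left_mono) auto
    also have "\<dots> = (\<Sum>g\<in>set as. \<bar>e g\<bar>) * lp_norm p x" by (simp add: sum_distrib_right)
    finally show ?thesis using that by (simp add: radf_def divide_right_mono)
  qed
  have out: "\<forall>x. x \<notin> lp p \<longrightarrow> radf p as e x = 0" by (simp add: radf_def)
  show ?thesis unfolding dual_space_def using add sc bd out by blast
qed

lemma radf_uv: "radf p as e (uv d) = (if d \<in> set as then e d else 0) / 2 ^ length as"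
proof -
  have "(\<Sum>g\<in>set as. e g * uv d g) = (\<Sum>g\<in>set as. if g = d then e g else 0)"
    by (intro sum.cong) (auto simp: uv_def)
  also have "\<dots> = (if d \<in> set as then e d else 0)" by (simp add: sum.delta')
  finally show ?thesis by (simp add: radf_def uv_lp[OF p1 p2])
qed

lemma Tm_radf: assumes "e \<in> set (signs as)"
  shows "Tm p z (radf p as e) = (\<Sum>g\<in>set as. z g) / 2 ^ length as"
proof -
  have "\<bar>radf p as e (uv g)\<bar> = (if g \<in> set as then 1 else 0) / 2 ^ length as" for g
    using signs_abs[OF assms] by (simp add: radf_uv)
  hence "(\<Sum>\<^sub>\<infinity>g. z g * \<bar>radf p as e (uv g)\<bar>) = (\<Sum>g\<in>set as. z g * \<bar>radf p as e (uv g)\<bar>)"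
    by (intro fin_supp(2)) auto
  also have "\<dots> = (\<Sum>g\<in>set as. z g / 2 ^ length as)"
    using signs_abs[OF assms] by (intro sum.cong) (auto simp: radf_uv)
  finally show ?thesis using radf_dual[of as e] by (simp add: Tm_def sum_divide_distrib)
qed

lemma radf_adm: assumes "distinct as" "x \<in> lp p" "lp_norm p x \<le> 1"
  shows "(\<Sum>k<2 ^ length as. \<bar>radf p as (signs as ! k) x\<bar>) \<le> 1"
proof -
  define L where "L = signs as"
  define m where "m = length L"
  have m: "m = 2 ^ length as" by (simp add: m_def L_def length_signs)
  define S where "S k = (\<Sum>g\<in>set as. (L ! k) g * x g)" for k
  define Q where "Q = (\<Sum>g\<in>set as. (x g)^2)"
  have Q: "Q \<le> 1" unfolding Q_def using finite_sq[OF p1 p2 assms(2,3)] by simp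
  have Q0: "Q \<ge> 0" unfolding Q_def by (intro sum_nonneg) auto
  have N0: "(2::real) ^ length as > 0" by simp
  have sq: "(\<Sum>k<m. (S k)^2) = 2 ^ length as * Q"
  proof -
    have "sum_list (map (\<lambda>e. (0 + (\<Sum>g\<in>set as. e g * x g))^2) L) = (\<Sum>k<m. (S k)^2)"
      unfolding sum_list_sum_nth by (simp add: m_def S_def atLeast0LessThan)
    thus ?thesis using signs_sq[OF assms(1), of 0 x] by (simp add: L_def Q_def)
  qed
  have "(\<Sum>k<m. \<bar>S k\<bar>)^2 \<le> (\<Sum>k<m. (\<bar>S k\<bar>)^2) * card {..<m}"
    by (rule sum_squared_le_sum_of_squares)
  also have "\<dots> = 2 ^ length as * Q * 2 ^ length as" using sq m by simp
  also have "\<dots> \<le> (2 ^ length as)^2" using Q N0 by (simp add: power2_eq_square mult_left_le)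
  finally have "(\<Sum>k<m. \<bar>S k\<bar>) \<le> 2 ^ length as"
    by (rule power2_le_imp_le) simp
  moreover have "(\<Sum>k<2 ^ length as. \<bar>radf p as (signs as ! k) x\<bar>) = (\<Sum>k<m. \<bar>S k\<bar> / 2 ^ length as)"
    using assms(2) by (simp add: m radf_def S_def L_def abs_divide)
  moreover have "(\<Sum>k<m. \<bar>S k\<bar> / 2 ^ length as) = (\<Sum>k<m. \<bar>S k\<bar>) / 2 ^ length as"
    by (simp add: sum_divide_distrib)
  ultimately show ?thesis using N0 by (simp add: divide_le_eq_1)
qed

lemma lower_fin: assumes "z \<in> l1" "finite P"
  shows "\<bar>\<Sum>g\<in>P. z g\<bar> \<le> fbl_norm (lp p) (lp_norm p) (Tm p z)"
proof -
  obtain as where as: "distinct as" "set as = P" using finite_distinct_list[OF assms(2)] by blast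
  define n where "n = (2::nat) ^ length as"
  define xs where "xs k = radf p as (signs as ! k)" for k
  have mem: "signs as ! k \<in> set (signs as)" if "k < n" for k
    using that by (simp add: n_def length_signs)
  have "(\<Sum>k<n. \<bar>Tm p z (xs k)\<bar>) = (\<Sum>k<n. \<bar>\<Sum>g\<in>P. z g\<bar> / 2 ^ length as)"
    using mem as by (intro sum.cong) (auto simp: xs_def Tm_radf)
  also have "\<dots> = \<bar>\<Sum>g\<in>P. z g\<bar>" by (simp add: n_def)
  finally have eq: "(\<Sum>k<n. \<bar>Tm p z (xs k)\<bar>) = \<bar>\<Sum>g\<in>P. z g\<bar>" .
  have "(\<Sum>k<n. \<bar>Tm p z (xs k)\<bar>) \<in> fbl_sums (lp p) (lp_norm p) (Tm p z)"
    unfolding fbl_sums_def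
  proof (intro CollectI exI conjI)
    show "\<forall>k<n. xs k \<in> dual_space (lp p) (lp_norm p)" by (simp add: xs_def radf_dual)
    show "\<forall>x\<in>lp p. lp_norm p x \<le> 1 \<longrightarrow> (\<Sum>k<n. \<bar>xs k x\<bar>) \<le> 1"
      using radf_adm[OF as(1)] by (simp add: xs_def n_def)
  qed (rule refl)
  thus ?thesis using le_fn[OF p1 p2 Tm_bdd[OF p1 p2 assms(1)]] eq by simp
qed

lemma lower_fin2: assumes "z \<in> l1" "finite F"
  shows "(\<Sum>g\<in>F. \<bar>z g\<bar>) \<le> 2 * fbl_norm (lp p) (lp_norm p) (Tm p z)"
proof -
  have "(\<Sum>g\<in>F. \<bar>z g\<bar>) = (\<Sum>g\<in>F. if z g \<ge> 0 then z g else 0) - (\<Sum>g\<in>F. if z g < 0 then z g else 0)"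
    by (subst sum_subtractf[symmetric]) (auto intro!: sum.cong)
  also have "\<dots> = (\<Sum>g\<in>{g\<in>F. z g \<ge> 0}. z g) - (\<Sum>g\<in>{g\<in>F. z g < 0}. z g)"
    using assms(2) by (simp add: sum.inter_filter)
  also have "\<dots> \<le> \<bar>\<Sum>g\<in>{g\<in>F. z g \<ge> 0}. z g\<bar> + \<bar>\<Sum>g\<in>{g\<in>F. z g < 0}. z g\<bar>" by linarith
  also have "\<dots> \<le> 2 * fbl_norm (lp p) (lp_norm p) (Tm p z)"
    using lower_fin[OF assms(1), of "{g\<in>F. z g \<ge> 0}"] lower_fin[OF assms(1), of "{g\<in>F. z g < 0}"] assms(2)
    by simp
  finally show ?thesis .
qed

lemma lower: assumes "z \<in> l1" shows "l1_norm z \<le> 2 * fbl_norm (lp p) (lp_norm p) (Tm p z)"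
  unfolding l1_norm_def using lower_fin2[OF assms] l1_abs[OF assms]
  by (intro infsum_le_finite_sums) auto

end



context fixes p :: real assumes p1: "1 < p" and p2: "p \<le> 2" begin

lemma restr_l1: assumes "x \<in> l1" shows "(\<lambda>g. if g \<in> F then x g else 0) \<in> l1"
proof -
  have "(\<lambda>g. \<bar>if g \<in> F then x g else 0\<bar>) summable_on UNIV"
    by (rule summable_on_comparison_test[OF l1_abs[OF assms]]) auto
  thus ?thesis by (simp add: l1_def)
qed

lemma restr_l1': assumes "x \<in> l1" shows "(\<lambda>g. if g \<in> F then 0 else x g) \<in> l1"
proof -
  have "(\<lambda>g. \<bar>if g \<in> F then 0 else x g\<bar>) summable_on UNIV"
    by (rule summable_on_comparison_test[OF l1_abs[OF assms]]) auto
  thus ?thesis by (simp add: l1_def)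
qed

lemma Tm_fin: assumes "finite F"
  shows "Tm p (\<lambda>g. if g \<in> F then x g else 0) = (\<lambda>\<phi>. \<Sum>g\<in>F. x g * \<bar>delta_fun (lp p) (lp_norm p) (uv g) \<phi>\<bar>)"
proof -
  have "Tm p (\<lambda>g. if g \<in> F then x g else 0) \<phi> = (\<Sum>g\<in>F. x g * \<bar>delta_fun (lp p) (lp_norm p) (uv g) \<phi>\<bar>)" for \<phi>
  proof (cases "\<phi> \<in> dual_space (lp p) (lp_norm p)")
    case True
    have "(\<Sum>\<^sub>\<infinity>g. (if g \<in> F then x g else 0) * \<bar>\<phi> (uv g)\<bar>) = (\<Sum>g\<in>F. (if g \<in> F then x g else 0) * \<bar>\<phi> (uv g)\<bar>)"
      by (rule fin_supp(2)[OF assms]) auto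
    also have "\<dots> = (\<Sum>g\<in>F. x g * \<bar>delta_fun (lp p) (lp_norm p) (uv g) \<phi>\<bar>)"
      using True by (intro sum.cong) (auto simp: delta_fun_def)
    finally show ?thesis using True by (simp add: Tm_def)
  next
    case False thus ?thesis by (simp add: Tm_def delta_fun_def)
  qed
  thus ?thesis by (intro ext)
qed

lemma tail: assumes "x \<in> l1" "e > 0"
  shows "\<exists>F. finite F \<and> l1_norm (\<lambda>g. if g \<in> F then 0 else x g) \<le> e"
proof -
  obtain F where F: "finite F" "dist (sum (\<lambda>g. \<bar>x g\<bar>) F) (\<Sum>\<^sub>\<infinity>g. \<bar>x g\<bar>) \<le> e"
    using infsum_finite_approximation[OF l1_abs[OF assms(1)] assms(2)] by blast
  have "l1_norm (\<lambda>g. if g \<in> F then 0 else x g) = (\<Sum>\<^sub>\<infinity>g\<in>UNIV - F. \<bar>x g\<bar>)"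
    unfolding l1_norm_def by (rule infsum_cong_neutral) auto
  also have "\<dots> = (\<Sum>\<^sub>\<infinity>g. \<bar>x g\<bar>) - sum (\<lambda>g. \<bar>x g\<bar>) F"
    using infsum_Diff[OF l1_abs[OF assms(1)], of F] F(1) by simp
  also have "\<dots> \<le> e" using F(2) by (simp add: dist_real_def)
  finally show ?thesis using F(1) by blast
qed

lemma Tm_FBL: fixes x :: "'g \<Rightarrow> real" assumes x: "x \<in> l1" shows "Tm p x \<in> FBL (lp p) (lp_norm p)"
  unfolding FBL_def
proof (rule InterI)
  fix S :: "((('g \<Rightarrow> real) \<Rightarrow> real) \<Rightarrow> real) set" assume "S \<in> {S. closed_sublattice (lp p) (lp_norm p) S \<and> delta_fun (lp p) (lp_norm p) ` lp p \<subseteq> S}"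
  hence cs: "closed_sublattice (lp p) (lp_norm p) S" and dl: "delta_fun (lp p) (lp_norm p) ` lp p \<subseteq> S" by auto
  have add: "\<And>f g. f \<in> S \<Longrightarrow> g \<in> S \<Longrightarrow> (\<lambda>\<phi>. f \<phi> + g \<phi>) \<in> S"
    and sc: "\<And>f c. f \<in> S \<Longrightarrow> (\<lambda>\<phi>. c * f \<phi>) \<in> S"
    and mx: "\<And>f g. f \<in> S \<Longrightarrow> g \<in> S \<Longrightarrow> (\<lambda>\<phi>. max (f \<phi>) (g \<phi>)) \<in> S"
    and lim: "\<And>u f. (\<forall>n. u n \<in> S) \<Longrightarrow> f \<in> H0_space (lp p) (lp_norm p) \<Longrightarrow>
        (\<lambda>n. fbl_norm (lp p) (lp_norm p) (\<lambda>\<phi>. u n \<phi> - f \<phi>)) \<longlonglongrightarrow> 0 \<Longrightarrow> f \<in> S"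
    using cs unfolding closed_sublattice_def by simp_all
  have dS: "delta_fun (lp p) (lp_norm p) (uv g) \<in> S" for g using dl uv_lp[OF p1 p2, of g] by (rule subsetD[OF _ imageI])
  have aS: "(\<lambda>\<phi>. \<bar>delta_fun (lp p) (lp_norm p) (uv g) \<phi>\<bar>) \<in> S" for g
  proof -
    have "(\<lambda>\<phi>. max (delta_fun (lp p) (lp_norm p) (uv g) \<phi>) ((-1) * delta_fun (lp p) (lp_norm p) (uv g) \<phi>)) \<in> S"
      by (rule mx[OF dS sc[OF dS]])
    moreover have "(\<lambda>\<phi>. max (delta_fun (lp p) (lp_norm p) (uv g) \<phi>) ((-1) * delta_fun (lp p) (lp_norm p) (uv g) \<phi>))
       = (\<lambda>\<phi>. \<bar>delta_fun (lp p) (lp_norm p) (uv g) \<phi>\<bar>)" by (rule ext) (simp add: max_def)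
    ultimately show ?thesis by simp
  qed
  have fS: "(\<lambda>\<phi>. \<Sum>g\<in>F. x g * \<bar>delta_fun (lp p) (lp_norm p) (uv g) \<phi>\<bar>) \<in> S" if "finite F" for F
    using that
  proof (induction F rule: finite_induct)
    case empty
    have "(\<lambda>\<phi>. 0 * delta_fun (lp p) (lp_norm p) (uv undefined) \<phi>) \<in> S" by (rule sc[OF dS])
    thus ?case by simp
  next
    case (insert a F)
    have "(\<lambda>\<phi>. x a * \<bar>delta_fun (lp p) (lp_norm p) (uv a) \<phi>\<bar> + (\<Sum>g\<in>F. x g * \<bar>delta_fun (lp p) (lp_norm p) (uv g) \<phi>\<bar>)) \<in> S"
      by (rule add[OF sc[OF aS] insert.IH])
    thus ?case using insert.hyps by simp
  qed
  have "\<forall>n. \<exists>F. finite F \<and> l1_norm (\<lambda>g. if g \<in> F then 0 else x g) \<le> inverse (real (Suc n))"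
    using tail[OF x] by simp
  then obtain Fs where Fs0: "\<forall>n. finite (Fs n) \<and> l1_norm (\<lambda>g. if g \<in> Fs n then 0 else x g) \<le> inverse (real (Suc n))"
    by (subst (asm) choice_iff) (erule exE)
  hence Fs: "\<And>n. finite (Fs n)" "\<And>n. l1_norm (\<lambda>g. if g \<in> Fs n then 0 else x g) \<le> inverse (real (Suc n))"
    by auto
  define u where "u n = Tm p (\<lambda>g. if g \<in> Fs n then x g else 0)" for n
  have uS: "\<forall>n. u n \<in> S" unfolding u_def using Tm_fin[OF Fs(1)] fS[OF Fs(1)] by simp
  have bnd: "fbl_norm (lp p) (lp_norm p) (\<lambda>\<phi>. u n \<phi> - Tm p x \<phi>) \<le> inverse (real (Suc n))
     \<and> 0 \<le> fbl_norm (lp p) (lp_norm p) (\<lambda>\<phi>. u n \<phi> - Tm p x \<phi>)" for n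
  proof -
    define w where "w = (\<lambda>g. if g \<in> Fs n then 0 else x g)"
    define v where "v = (\<lambda>g. if g \<in> Fs n then x g else 0)"
    have w: "w \<in> l1" unfolding w_def by (rule restr_l1'[OF x])
    have v: "v \<in> l1" unfolding v_def by (rule restr_l1[OF x])
    have "x = (\<lambda>g. v g + w g)" by (auto simp: v_def w_def)
    hence Tx: "Tm p x = (\<lambda>\<phi>. Tm p v \<phi> + Tm p w \<phi>)" using Tm_add[OF p1 p2 v w] by simp
    have pw: "\<bar>u n \<phi> - Tm p x \<phi>\<bar> \<le> (\<Sum>\<^sub>\<infinity>g. \<bar>w g\<bar> * \<bar>\<phi> (uv g)\<bar>)"
      if "\<phi> \<in> dual_space (lp p) (lp_norm p)" for \<phi>
      using Tm_bound[OF p1 p2 w that] by (simp add: Tx u_def v_def[symmetric])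
    have sb: "s \<le> l1_norm w" if "s \<in> fbl_sums (lp p) (lp_norm p) (\<lambda>\<phi>. u n \<phi> - Tm p x \<phi>)" for s
      by (rule upper[OF p1 p2 w pw that])
    have "bdd_above (fbl_sums (lp p) (lp_norm p) (\<lambda>\<phi>. u n \<phi> - Tm p x \<phi>))"
      using sb by (intro bdd_aboveI) 
    hence "0 \<le> fbl_norm (lp p) (lp_norm p) (\<lambda>\<phi>. u n \<phi> - Tm p x \<phi>)" by (rule fn_nonneg[OF p1 p2])
    moreover have "fbl_norm (lp p) (lp_norm p) (\<lambda>\<phi>. u n \<phi> - Tm p x \<phi>) \<le> l1_norm w"
      using sb by (rule fn_le[OF p1 p2])
    ultimately show ?thesis using Fs(2)[of n] by (simp add: w_def)
  qed
  have "(\<lambda>n. fbl_norm (lp p) (lp_norm p) (\<lambda>\<phi>. u n \<phi> - Tm p x \<phi>)) \<longlonglongrightarrow> 0"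
    by (rule tendsto_sandwich[OF _ _ tendsto_const LIMSEQ_inverse_real_of_nat]) (use bnd in auto)
  thus "Tm p x \<in> S" using lim[OF uS Tm_H0[OF p1 p2 x]] by blast
qed

end



context fixes p :: real assumes p1: "1 < p" and p2: "p \<le> 2" begin

lemma closedY:
  fixes u :: "nat \<Rightarrow> ((('g\<Rightarrow>real)\<Rightarrow>real)\<Rightarrow>real)" and f :: "(('g\<Rightarrow>real)\<Rightarrow>real)\<Rightarrow>real"
  assumes uY: "\<forall>n. u n \<in> Tm p ` l1" and fF: "f \<in> FBL (lp p) (lp_norm p)"
    and lim: "(\<lambda>n. fbl_norm (lp p) (lp_norm p) (\<lambda>\<phi>. u n \<phi> - f \<phi>)) \<longlonglongrightarrow> 0"
  shows "f \<in> Tm p ` l1"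
proof -
  have "\<forall>n. \<exists>z. z \<in> l1 \<and> u n = Tm p z" using uY by blast
  then obtain X where X0: "\<forall>n. X n \<in> l1 \<and> u n = Tm p (X n)"
    by (subst (asm) choice_iff) (erule exE)
  hence Xl: "\<And>n. X n \<in> l1" and uX: "\<And>n. u n = Tm p (X n)" by auto
  have fH0: "f \<in> H0_space (lp p) (lp_norm p)" using FBL_sub_H0[OF p1 p2] fF by blast
  hence fH: "f \<in> H_space (lp p) (lp_norm p)" and bf: "bdd_above (fbl_sums (lp p) (lp_norm p) f)"
    by (auto simp: H0_space_def)
  define \<epsilon> where "\<epsilon> n = fbl_norm (lp p) (lp_norm p) (\<lambda>\<phi>. u n \<phi> - f \<phi>)" for n
  have lim\<epsilon>: "\<epsilon> \<longlonglongrightarrow> 0" using lim unfolding \<epsilon>_def[abs_def] .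
  have bu: "bdd_above (fbl_sums (lp p) (lp_norm p) (u n))" for n
    using Tm_bdd[OF p1 p2 Xl] by (simp add: uX)
  have bg: "bdd_above (fbl_sums (lp p) (lp_norm p) (\<lambda>\<phi>. u n \<phi> - f \<phi>))" for n
    by (rule bdd_comb[OF p1 p2 bu[of n] bf, of 1 1]) auto
  have e0: "0 \<le> \<epsilon> n" for n unfolding \<epsilon>_def by (rule fn_nonneg[OF p1 p2 bg[of n]])
  define x where "x g = f (ev p g)" for g
  have i: "\<bar>X n g - x g\<bar> \<le> \<epsilon> n" for n g
  proof -
    have "\<bar>(\<lambda>\<phi>. u n \<phi> - f \<phi>) (ev p g)\<bar> \<le> \<epsilon> n" unfolding \<epsilon>_def
      by (rule single_le[OF p1 p2 bg[of n] ev_dual[OF p1 p2] ev_adm[OF p1 p2]])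
    thus ?thesis using Tm_ev[OF p1 p2, of "X n" g] by (simp add: x_def uX)
  qed
  have ii: "(\<Sum>g\<in>F. \<bar>X n g - X m g\<bar>) \<le> 2 * (\<epsilon> n + \<epsilon> m)" if F: "finite F" for F n m
  proof -
    have z: "(\<lambda>g. X n g - X m g) \<in> l1" by (rule l1_diff[OF Xl Xl])
    have Tz: "Tm p (\<lambda>g. X n g - X m g) = (\<lambda>\<phi>. u n \<phi> - u m \<phi>)"
      using Tm_diff[OF p1 p2 Xl Xl, of n m] by (simp add: uX)
    have "fbl_norm (lp p) (lp_norm p) (\<lambda>\<phi>. u n \<phi> - u m \<phi>) \<le> 1 * \<epsilon> n + 1 * \<epsilon> m"
      unfolding \<epsilon>_def
      by (rule fn_le[OF p1 p2], rule fs_comb[OF p1 p2 bg[of n] bg[of m]]) auto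
    thus ?thesis using lower_fin2[OF p1 p2 z F] Tz by simp
  qed
  have iii: "(\<Sum>g\<in>F. \<bar>X n g - x g\<bar>) \<le> 2 * \<epsilon> n" if F: "finite F" for F n
  proof -
    have le: "(\<Sum>g\<in>F. \<bar>X n g - x g\<bar>) \<le> 2 * (\<epsilon> n + \<epsilon> m) + real (card F) * \<epsilon> m" for m
    proof -
      have "(\<Sum>g\<in>F. \<bar>X n g - x g\<bar>) \<le> (\<Sum>g\<in>F. \<bar>X n g - X m g\<bar> + \<bar>X m g - x g\<bar>)"
        by (intro sum_mono) linarith
      also have "\<dots> = (\<Sum>g\<in>F. \<bar>X n g - X m g\<bar>) + (\<Sum>g\<in>F. \<bar>X m g - x g\<bar>)" by (rule sum.distrib)
      also have "(\<Sum>g\<in>F. \<bar>X m g - x g\<bar>) \<le> (\<Sum>g\<in>F. \<epsilon> m)" by (intro sum_mono i)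
      also have "(\<Sum>g\<in>F. \<epsilon> m) = real (card F) * \<epsilon> m" by simp
      finally show ?thesis using ii[OF F, of n m] by linarith
    qed
    have L: "(\<lambda>m. 2 * (\<epsilon> n + \<epsilon> m) + real (card F) * \<epsilon> m) \<longlonglongrightarrow> 2 * (\<epsilon> n + 0) + real (card F) * 0"
      by (intro tendsto_intros lim\<epsilon>)
    have "(\<Sum>g\<in>F. \<bar>X n g - x g\<bar>) \<le> 2 * (\<epsilon> n + 0) + real (card F) * 0"
      by (rule LIMSEQ_le_const[OF L]) (use le in auto)
    thus ?thesis by simp
  qed
  have dl: "(\<lambda>g. X n g - x g) \<in> l1" for n
  proof -
    have "(\<lambda>g. \<bar>X n g - x g\<bar>) summable_on UNIV"
      by (rule nonneg_bdd_above_summable_on) (use iii in \<open>auto intro!: bdd_aboveI[of _ "2 * \<epsilon> n"]\<close>)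
    thus ?thesis by (simp add: l1_def)
  qed
  have dn: "l1_norm (\<lambda>g. X n g - x g) \<le> 2 * \<epsilon> n" for n
    unfolding l1_norm_def using iii l1_abs[OF dl] by (intro infsum_le_finite_sums) auto
  have xl: "x \<in> l1" using l1_diff[OF Xl dl, of 0 0] by simp
  have "f \<phi> = Tm p x \<phi>" for \<phi>
  proof (cases "\<phi> \<in> dual_space (lp p) (lp_norm p)")
    case False thus ?thesis using H_out[OF p1 p2 fH False] by (simp add: Tm_def)
  next
    case True
    obtain C where C: "C > 0" "\<forall>y\<in>lp p. \<bar>\<phi> y\<bar> \<le> C * lp_norm p y" using dual_bound[OF p1 p2 True] by blast
    obtain C' where C': "C' > 0" "\<forall>g. \<bar>\<phi> (uv g)\<bar> \<le> C'" using dual_uv_bound[OF p1 p2 True] by blast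
    define \<psi> where "\<psi> = (\<lambda>y. (1 / C) * \<phi> y)"
    have \<psi>D: "\<psi> \<in> dual_space (lp p) (lp_norm p)" unfolding \<psi>_def by (rule dual_smult[OF p1 p2 True])
    have \<psi>a: "\<bar>\<psi> y\<bar> \<le> 1" if "y \<in> lp p" "lp_norm p y \<le> 1" for y
    proof -
      have "\<bar>\<phi> y\<bar> \<le> C * lp_norm p y" using C(2) that(1) by blast
      also have "\<dots> \<le> C * 1" using C(1) that(2) by (intro mult_left_mono) auto
      finally have "\<bar>\<phi> y\<bar> \<le> C * 1" .
      thus ?thesis using C(1) by (simp add: \<psi>_def abs_mult field_simps)
    qed
    have A: "\<bar>u n \<phi> - f \<phi>\<bar> \<le> C * \<epsilon> n" for n
    proof -
      have "\<bar>(\<lambda>\<phi>. u n \<phi> - f \<phi>) \<psi>\<bar> \<le> \<epsilon> n" unfolding \<epsilon>_def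
        by (rule single_le[OF p1 p2 bg[of n] \<psi>D \<psi>a])
      moreover have "u n \<psi> = (1/C) * u n \<phi>" unfolding \<psi>_def uX
        using H_hom[OF p1 p2 Tm_H[OF p1 p2] True, of "1/C"] C(1) by simp
      moreover have "f \<psi> = (1/C) * f \<phi>" unfolding \<psi>_def
        using H_hom[OF p1 p2 fH True, of "1/C"] C(1) by simp
      ultimately have "(1/C) * \<bar>u n \<phi> - f \<phi>\<bar> \<le> \<epsilon> n" using C(1)
        by (simp add: diff_divide_distrib[symmetric] abs_divide)
      thus ?thesis using C(1) by (simp add: field_simps)
    qed
    have B: "\<bar>u n \<phi> - Tm p x \<phi>\<bar> \<le> C' * (2 * \<epsilon> n)" for n
    proof -
      have "u n \<phi> - Tm p x \<phi> = Tm p (\<lambda>g. X n g - x g) \<phi>"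
        using Tm_diff[OF p1 p2 Xl xl, of n] by (simp add: uX)
      also have "\<bar>\<dots>\<bar> \<le> (\<Sum>\<^sub>\<infinity>g. \<bar>X n g - x g\<bar> * \<bar>\<phi> (uv g)\<bar>)" by (rule Tm_bound[OF p1 p2 dl True])
      also have "\<dots> \<le> (\<Sum>\<^sub>\<infinity>g. C' * \<bar>X n g - x g\<bar>)"
      proof (rule infsum_mono)
        show "(\<lambda>g. \<bar>X n g - x g\<bar> * \<bar>\<phi> (uv g)\<bar>) summable_on UNIV" by (rule summ_abs[OF p1 p2 dl True])
        show "(\<lambda>g. C' * \<bar>X n g - x g\<bar>) summable_on UNIV" by (rule summable_on_cmult_right[OF l1_abs[OF dl]])
      qed (use C' in \<open>auto simp: mult.commute intro: mult_right_mono\<close>)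
      also have "\<dots> = C' * l1_norm (\<lambda>g. X n g - x g)" unfolding l1_norm_def
        by (rule infsum_cmult_right[OF l1_abs[OF dl]])
      also have "\<dots> \<le> C' * (2 * \<epsilon> n)" using dn C'(1) by (intro mult_left_mono) auto
      finally show ?thesis .
    qed
    have le: "\<bar>f \<phi> - Tm p x \<phi>\<bar> \<le> (C + 2 * C') * \<epsilon> n" for n
      using A[of n] B[of n] by (simp add: algebra_simps)
    have "(\<lambda>n. (C + 2 * C') * \<epsilon> n) \<longlonglongrightarrow> (C + 2 * C') * 0" by (intro tendsto_intros lim\<epsilon>)
    hence "\<bar>f \<phi> - Tm p x \<phi>\<bar> \<le> (C + 2 * C') * 0" by (rule LIMSEQ_le_const) (use le in auto)
    thus ?thesis by simp
  qed
  hence "f = Tm p x" by (intro ext)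
  thus ?thesis using xl by blast
qed

end

theorem theorem5p4:
  fixes p :: real
  assumes "1 < p" and "p \<le> 2"
  shows "\<exists>(Y :: ((('g \<Rightarrow> real) \<Rightarrow> real) \<Rightarrow> real) set) (T :: ('g \<Rightarrow> real) \<Rightarrow> (('g \<Rightarrow> real) \<Rightarrow> real) \<Rightarrow> real) c C.
     Y \<subseteq> FBL (lp p) (lp_norm p) \<and>
     (\<forall>f\<in>Y. \<forall>g\<in>Y. (\<lambda>\<phi>. f \<phi> + g \<phi>) \<in> Y) \<and>
     (\<forall>f\<in>Y. \<forall>a. (\<lambda>\<phi>. a * f \<phi>) \<in> Y) \<and>
     (\<forall>u f. (\<forall>n. u n \<in> Y) \<longrightarrow> f \<in> FBL (lp p) (lp_norm p) \<longrightarrow>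
        (\<lambda>n. fbl_norm (lp p) (lp_norm p) (\<lambda>\<phi>. u n \<phi> - f \<phi>)) \<longlonglongrightarrow> 0 \<longrightarrow> f \<in> Y) \<and>
     bij_betw T (l1 :: ('g \<Rightarrow> real) set) Y \<and>
     (\<forall>x\<in>l1. \<forall>y\<in>l1. T (\<lambda>\<gamma>. x \<gamma> + y \<gamma>) = (\<lambda>\<phi>. T x \<phi> + T y \<phi>)) \<and>
     (\<forall>x\<in>l1. \<forall>a. T (\<lambda>\<gamma>. a * x \<gamma>) = (\<lambda>\<phi>. a * T x \<phi>)) \<and>
     0 < c \<and>
     (\<forall>x\<in>l1. c * l1_norm x \<le> fbl_norm (lp p) (lp_norm p) (T x) \<and>
              fbl_norm (lp p) (lp_norm p) (T x) \<le> C * l1_norm x)"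
proof -
  define Y where "Y = Tm p ` (l1 :: ('g \<Rightarrow> real) set)"
  have s1: "Y \<subseteq> FBL (lp p) (lp_norm p)" unfolding Y_def using Tm_FBL[OF assms] by blast
  have ad: "(\<lambda>\<phi>. Tm p x \<phi> + Tm p y \<phi>) \<in> Tm p ` l1" if "x \<in> l1" "y \<in> l1" for x y :: "'g \<Rightarrow> real"
    by (rule image_eqI[where f="Tm p" and x="\<lambda>g. x g + y g", OF Tm_add[OF assms that, symmetric]]) (rule l1_add[OF that])
  have s2: "\<forall>f\<in>Y. \<forall>g\<in>Y. (\<lambda>\<phi>. f \<phi> + g \<phi>) \<in> Y" unfolding Y_def using ad by blast
  have sm: "(\<lambda>\<phi>. a * Tm p x \<phi>) \<in> Tm p ` l1" if "x \<in> l1" for x :: "'g \<Rightarrow> real" and a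
    by (rule image_eqI[where f="Tm p" and x="\<lambda>g. a * x g", OF Tm_scale[OF assms that, symmetric]]) (rule l1_scale[OF that])
  have s3: "\<forall>f\<in>Y. \<forall>a. (\<lambda>\<phi>. a * f \<phi>) \<in> Y" unfolding Y_def using sm by blast
  have s4: "\<forall>u f. (\<forall>n. u n \<in> Y) \<longrightarrow> f \<in> FBL (lp p) (lp_norm p) \<longrightarrow>
        (\<lambda>n. fbl_norm (lp p) (lp_norm p) (\<lambda>\<phi>. u n \<phi> - f \<phi>)) \<longlonglongrightarrow> 0 \<longrightarrow> f \<in> Y"
    unfolding Y_def by (intro allI impI) (rule closedY[OF assms])
  have inj: "x = y" if "x \<in> l1" "y \<in> l1" "Tm p x = Tm p y" for x y :: "'g \<Rightarrow> real"
  proof (rule ext)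
    fix g0 :: 'g
    have "x g0 = Tm p x (ev p g0)" by (rule Tm_ev[OF assms, symmetric])
    also have "\<dots> = Tm p y (ev p g0)" using that(3) by simp
    also have "\<dots> = y g0" by (rule Tm_ev[OF assms])
    finally show "x g0 = y g0" .
  qed
  have s5: "bij_betw (Tm p) (l1 :: ('g \<Rightarrow> real) set) Y"
    unfolding bij_betw_def Y_def inj_on_def using inj by blast
  have s6: "\<forall>x\<in>l1. \<forall>y\<in>l1. Tm p (\<lambda>\<gamma>. x \<gamma> + y \<gamma>) = (\<lambda>\<phi>. Tm p x \<phi> + Tm p y \<phi>)"
    using Tm_add[OF assms] by blast
  have s7: "\<forall>x\<in>l1. \<forall>a. Tm p (\<lambda>\<gamma>. a * x \<gamma>) = (\<lambda>\<phi>. a * Tm p x \<phi>)"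
    using Tm_scale[OF assms] by blast
  have s9: "\<forall>x\<in>l1. (1/2) * l1_norm x \<le> fbl_norm (lp p) (lp_norm p) (Tm p x) \<and>
              fbl_norm (lp p) (lp_norm p) (Tm p x) \<le> 1 * l1_norm x"
    using lower[OF assms] Tm_upper[OF assms] by fastforce
  show ?thesis
    apply (rule exI[of _ Y], rule exI[of _ "Tm p"], rule exI[of _ "1/2::real"], rule exI[of _ "1::real"])
    using s1 s2 s3 s4 s5 s6 s7 s9 by simp
qed

end
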